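(* Let $\Pi$ be an infinite atomless L\'evy measure on $(0,\infty)$ with tail $\overline{\Pi}(x)=\Pi((x,\infty))$ and inverse $\overline{\Pi}^{\leftarrow}(y)=\inf\{x>0:\overline{\Pi}(x)\le y\}$. Suppose there are functions $a:(0,\infty)\to(0,\infty)$, $b:(0,\infty)\to\mathbb{R}$ and $\gamma\le0$ such that for all $y\in\mathbb{R}$, $$\lim_{r\to\infty}\frac{\overline{\Pi}^{\leftarrow}(r-y\sqrt r)-b(r)}{a(r)}=h^{\leftarrow}(y),$$ where $h^{\leftarrow}(y)=(1-e^{-\gamma y/2})/\gamma$ if $\gamma\ne0$ and $h^{\leftarrow}(y)=y/2$ if $\gamma=0$. Let $H^{\leftarrow}(x)=\tfrac14\log^2x$ for $x>1$ and $V(x)=\overline{\Pi}^{\leftarrow}(H^{\leftarrow}(x))$, $x>1$. Then: (i) if $\gamma<0$, $V(x)\sim a(H^{\leftarrow}(x))/|\gamma|$ as $x\to\infty$, and this function is regularly varying at $\infty$ with index $-|\gamma|/2$; (ii) if $\gamma=0$, $-V$ belongs to de Haan's class $\Pi$ with slowly varying auxiliary function $\tfrac12 a(H^{\leftarrow}(\cdot))$, i.e. $\lim_{s\to\infty}\frac{-V(sx)+V(s)}{\frac12a(H^{\leftarrow}(s))}=\log x$ for all $x>0$.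
   Context: $H^{\leftarrow}$ is the inverse of $H(t)=e^{2\sqrt t}$. A measurable function $U$ is in de Haan's class $\Pi$ with auxiliary function $g>0$ if $(U(sx)-U(s))/g(s)\to\log x$ as $s\to\infty$ for all $x>0$. *)

theory Defs
  imports "HOL-Probability.Probability" "HOL-Library.Landau_Symbols"
begin

definition levy_measure_pos :: "real measure \<Rightarrow> bool" where
  "levy_measure_pos P \<longleftrightarrow> sets P = sets borel \<and> emeasure P {..0} = 0 \<and>
     (\<integral>\<^sup>+ x. ennreal (min 1 (x\<^sup>2)) \<partial>P) < \<infinity>"

definition infinite_measure_pos :: "real measure \<Rightarrow> bool" where
  "infinite_measure_pos P \<longleftrightarrow> emeasure P {0<..} = \<infinity>"

definition atomless :: "real measure \<Rightarrow> bool" where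
  "atomless P \<longleftrightarrow> (\<forall>x. emeasure P {x} = 0)"

definition tail :: "real measure \<Rightarrow> real \<Rightarrow> real" where
  "tail P x = measure P {x<..}"

definition tail_inv :: "real measure \<Rightarrow> real \<Rightarrow> real" where
  "tail_inv P y = Inf {x. x > 0 \<and> tail P x \<le> y}"

definition h_inv :: "real \<Rightarrow> real \<Rightarrow> real" where
  "h_inv \<gamma> y = (if \<gamma> \<noteq> 0 then (1 - exp (- \<gamma> * y / 2)) / \<gamma> else y / 2)"

definition H_inv :: "real \<Rightarrow> real" where
  "H_inv x = (ln x)\<^sup>2 / 4"

definition regularly_varying :: "(real \<Rightarrow> real) \<Rightarrow> real \<Rightarrow> bool" where
  "regularly_varying f \<rho> \<longleftrightarrow> eventually (\<lambda>x. f x > 0) at_top \<and>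
     (\<forall>l>0. ((\<lambda>x. f (l * x) / f x) \<longlongrightarrow> l powr \<rho>) at_top)"

definition slowly_varying :: "(real \<Rightarrow> real) \<Rightarrow> bool" where
  "slowly_varying f \<longleftrightarrow> regularly_varying f 0"

definition deHaan_Pi :: "(real \<Rightarrow> real) \<Rightarrow> (real \<Rightarrow> real) \<Rightarrow> bool" where
  "deHaan_Pi U g \<longleftrightarrow> eventually (\<lambda>s. g s > 0) at_top \<and>
     (\<forall>x>0. ((\<lambda>s. (U (s * x) - U s) / g s) \<longlongrightarrow> ln x) at_top)"

end

theory Submission
  imports Defs "HOL-Real_Asymp.Real_Asymp"
begin
definition kf :: "real \<Rightarrow> real \<Rightarrow> real" where "kf g y = exp (- g * y / 2)"
lemma h_add: "h_inv g (y + z) = h_inv g y + kf g y * h_inv g z"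
proof (cases "g = 0")
  case True then show ?thesis by (simp add: h_inv_def kf_def)
next
  case False
  have e: "- g * (y + z) / 2 = - g * y / 2 + - g * z / 2" by (simp add: field_simps)
  have "exp (- g * (y + z) / 2) = exp (- g * y / 2) * exp (- g * z / 2)"
    unfolding e exp_add ..
  with False show ?thesis by (simp add: h_inv_def kf_def field_simps)
qed
lemma h0: "h_inv g 0 = 0" by (simp add: h_inv_def)
lemma h1: "g \<le> 0 \<Longrightarrow> h_inv g 1 \<noteq> 0" by (simp add: h_inv_def)
lemma h_cont: "isCont (h_inv g) y"
  unfolding h_inv_def by (cases "g = 0") (simp_all add: continuous_intros)

locale rvs =
  fixes T a b :: "real \<Rightarrow> real" and g Y0 :: real
  assumes mono: "\<And>u v. Y0 \<le> u \<Longrightarrow> u \<le> v \<Longrightarrow> T v \<le> T u"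
  and apos: "\<And>r. r > 0 \<Longrightarrow> a r > 0"
  and hyp: "\<And>y. ((\<lambda>r. (T (r - y * sqrt r) - b r) / a r) \<longlongrightarrow> h_inv g y) at_top"
begin

lemma ev_ge: "eventually (\<lambda>r. r - c * sqrt r \<ge> Y) at_top"
proof -
  have "filterlim (\<lambda>r::real. r - c * sqrt r) at_top at_top" by real_asymp
  then show ?thesis by (simp add: filterlim_at_top)
qed

lemma shift:
  assumes lim: "((\<lambda>r. (\<rho> r - r) / sqrt r) \<longlongrightarrow> - y) at_top"
  shows "((\<lambda>r. (T (\<rho> r) - b r) / a r) \<longlongrightarrow> h_inv g y) at_top"
  unfolding tendsto_iff dist_real_def
proof (intro allI impI)
  fix e :: real assume e: "e > 0"
  from LIM_D[OF h_cont[unfolded isCont_def, of g y], of "e/2"] e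
  obtain s where s: "s > 0" "\<And>x. x \<noteq> y \<and> norm (x - y) < s \<Longrightarrow> norm (h_inv g x - h_inv g y) < e/2"
    by auto
  define d where "d = s / 2"
  have d: "d > 0" "d < s" using s by (auto simp: d_def)
  have hd1: "\<bar>h_inv g (y - d) - h_inv g y\<bar> < e/2" using s(2)[of "y - d"] d by auto
  have hd2: "\<bar>h_inv g (y + d) - h_inv g y\<bar> < e/2" using s(2)[of "y + d"] d by auto
  have e2: "e/2 > 0" using e by simp
  have E1: "eventually (\<lambda>r. \<bar>(T (r - (y - d) * sqrt r) - b r) / a r - h_inv g (y - d)\<bar> < e/2) at_top"
    using hyp[of "y - d", unfolded tendsto_iff dist_real_def] e2 by blast
  have E2: "eventually (\<lambda>r. \<bar>(T (r - (y + d) * sqrt r) - b r) / a r - h_inv g (y + d)\<bar> < e/2) at_top"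
    using hyp[of "y + d", unfolded tendsto_iff dist_real_def] e2 by blast
  have E3: "eventually (\<lambda>r. \<bar>(\<rho> r - r) / sqrt r - - y\<bar> < d) at_top"
    using lim[unfolded tendsto_iff dist_real_def] d by auto
  have E4: "eventually (\<lambda>r. r - (y + d) * sqrt r \<ge> Y0) at_top" by (rule ev_ge)
  have E5: "eventually (\<lambda>r. r > (0::real)) at_top" by (rule eventually_gt_at_top)
  show "eventually (\<lambda>r. \<bar>(T (\<rho> r) - b r) / a r - h_inv g y\<bar> < e) at_top"
    using E1 E2 E3 E4 E5
  proof eventually_elim
    case (elim r)
    have sr: "sqrt r > 0" using elim by simp
    have ar: "a r > 0" using apos elim by simp
    have "-y - d < (\<rho> r - r) / sqrt r" "(\<rho> r - r) / sqrt r < -y + d" using elim(3) by auto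
    then have "(-y - d) * sqrt r < \<rho> r - r" "\<rho> r - r < (-y + d) * sqrt r"
      using sr by (simp_all add: field_simps)
    then have l: "r - (y + d) * sqrt r \<le> \<rho> r" "\<rho> r \<le> r - (y - d) * sqrt r"
      by (simp_all add: algebra_simps)
    have m1: "T (\<rho> r) \<le> T (r - (y + d) * sqrt r)" using mono elim(4) l by blast
    have m2: "T (r - (y - d) * sqrt r) \<le> T (\<rho> r)" using mono elim(4) l by (meson order_trans)
    have "(T (\<rho> r) - b r) / a r \<le> (T (r - (y + d) * sqrt r) - b r) / a r"
      using m1 ar by (intro divide_right_mono) auto
    moreover have "(T (r - (y - d) * sqrt r) - b r) / a r \<le> (T (\<rho> r) - b r) / a r"
      using m2 ar by (intro divide_right_mono) auto
    ultimately show ?case using elim(1,2) hd1 hd2 by linarith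
  qed
qed

lemma ratio:
  assumes sig: "filterlim \<sigma> at_top at_top"
    and lim: "((\<lambda>r. (\<sigma> r - r) / sqrt r) \<longlongrightarrow> - y) at_top"
    and gn: "g \<le> 0"
  shows "((\<lambda>r. a (\<sigma> r) / a r) \<longlongrightarrow> kf g y) at_top"
    and "((\<lambda>r. (b (\<sigma> r) - b r) / a r) \<longlongrightarrow> h_inv g y) at_top"
proof -
  have E5: "eventually (\<lambda>r. r > (0::real)) at_top" by (rule eventually_gt_at_top)
  have Es: "eventually (\<lambda>r. \<sigma> r > (0::real)) at_top"
    using sig by (simp add: filterlim_at_top_dense)
  have inv: "((\<lambda>r::real. 1 / sqrt r) \<longlongrightarrow> 0) at_top" by real_asymp
  have q: "((\<lambda>r. 1 + (\<sigma> r - r) / sqrt r * (1 / sqrt r)) \<longlongrightarrow> 1) at_top"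
    using tendsto_add[OF tendsto_const[of 1] tendsto_mult[OF lim inv]] by simp
  have "((\<lambda>r. \<sigma> r / r) \<longlongrightarrow> 1) at_top"
    using q
  proof (rule Lim_transform_eventually) 
    show "eventually (\<lambda>r. 1 + (\<sigma> r - r) / sqrt r * (1 / sqrt r) = \<sigma> r / r) at_top"
      using E5 by eventually_elim (simp add: field_simps)
  qed
  then have "((\<lambda>r. sqrt (\<sigma> r / r)) \<longlongrightarrow> sqrt 1) at_top" by (rule tendsto_real_sqrt)
  then have sq: "((\<lambda>r. sqrt (\<sigma> r) / sqrt r) \<longlongrightarrow> 1) at_top" by (simp add: real_sqrt_divide)
  have L1: "((\<lambda>r. (T (\<sigma> r - z * sqrt (\<sigma> r)) - b r) / a r) \<longlongrightarrow> h_inv g (y + z)) at_top" for z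
  proof (rule shift)
    have tl: "((\<lambda>r. (\<sigma> r - r) / sqrt r - z * (sqrt (\<sigma> r) / sqrt r)) \<longlongrightarrow> - y - z * 1) at_top"
      by (intro tendsto_intros lim sq)
    then show "((\<lambda>r. (\<sigma> r - z * sqrt (\<sigma> r) - r) / sqrt r) \<longlongrightarrow> - (y + z)) at_top"
    proof -
      have eq: "(\<lambda>r. (\<sigma> r - z * sqrt (\<sigma> r) - r) / sqrt r) = (\<lambda>r. (\<sigma> r - r) / sqrt r - z * (sqrt (\<sigma> r) / sqrt r))"
        by (rule ext) (simp add: diff_divide_distrib)
      show ?thesis unfolding eq using tl by simp
    qed
  qed
  have L2: "((\<lambda>r. (T (\<sigma> r - z * sqrt (\<sigma> r)) - b (\<sigma> r)) / a (\<sigma> r)) \<longlongrightarrow> h_inv g z) at_top" for z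
    using filterlim_compose[OF hyp[of z] sig] .
  have D1: "((\<lambda>r. (T (\<sigma> r - 1 * sqrt (\<sigma> r)) - b r) / a r - (T (\<sigma> r - 0 * sqrt (\<sigma> r)) - b r) / a r)
     \<longlongrightarrow> h_inv g (y + 1) - h_inv g (y + 0)) at_top"
    by (intro tendsto_diff L1)
  have D2: "((\<lambda>r. (T (\<sigma> r - 1 * sqrt (\<sigma> r)) - b (\<sigma> r)) / a (\<sigma> r) - (T (\<sigma> r - 0 * sqrt (\<sigma> r)) - b (\<sigma> r)) / a (\<sigma> r))
     \<longlongrightarrow> h_inv g 1 - h_inv g 0) at_top"
    by (intro tendsto_diff L2)
  define N where "N r = T (\<sigma> r - sqrt (\<sigma> r)) - T (\<sigma> r)" for r
  have D1': "((\<lambda>r. N r / a r) \<longlongrightarrow> kf g y * h_inv g 1) at_top"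
    using D1 by (simp add: N_def diff_divide_distrib h_add h0)
  have D2': "((\<lambda>r. N r / a (\<sigma> r)) \<longlongrightarrow> h_inv g 1) at_top"
    using D2 by (simp add: N_def diff_divide_distrib h0)
  have hn: "h_inv g 1 \<noteq> 0" using h1[OF gn] .
  have EN: "eventually (\<lambda>r. N r / a (\<sigma> r) \<noteq> 0) at_top"
    using D2' hn by (rule tendsto_imp_eventually_ne)
  have "((\<lambda>r. (N r / a r) / (N r / a (\<sigma> r))) \<longlongrightarrow> kf g y * h_inv g 1 / h_inv g 1) at_top"
    by (intro tendsto_divide D1' D2' hn)
  then have "((\<lambda>r. (N r / a r) / (N r / a (\<sigma> r))) \<longlongrightarrow> kf g y) at_top"
    using hn by simp
  then show R: "((\<lambda>r. a (\<sigma> r) / a r) \<longlongrightarrow> kf g y) at_top"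
  proof (rule Lim_transform_eventually) 
    show "eventually (\<lambda>r. (N r / a r) / (N r / a (\<sigma> r)) = a (\<sigma> r) / a r) at_top"
      using E5 Es EN
    proof eventually_elim
      case (elim r)
      then have "a r > 0" "a (\<sigma> r) > 0" using apos by auto
      with elim show ?case by (simp add: field_simps)
    qed
  qed
  have "((\<lambda>r. (T (\<sigma> r - 0 * sqrt (\<sigma> r)) - b r) / a r - (T (\<sigma> r - 0 * sqrt (\<sigma> r)) - b (\<sigma> r)) / a (\<sigma> r) * (a (\<sigma> r) / a r))
     \<longlongrightarrow> h_inv g (y + 0) - h_inv g 0 * kf g y) at_top"
    by (intro tendsto_intros L1 L2 R)
  then have "((\<lambda>r. (T (\<sigma> r - 0 * sqrt (\<sigma> r)) - b r) / a r - (T (\<sigma> r - 0 * sqrt (\<sigma> r)) - b (\<sigma> r)) / a (\<sigma> r) * (a (\<sigma> r) / a r))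
     \<longlongrightarrow> h_inv g y) at_top" by (simp add: h0)
  then show "((\<lambda>r. (b (\<sigma> r) - b r) / a r) \<longlongrightarrow> h_inv g y) at_top"
  proof (rule Lim_transform_eventually) 
    show "eventually (\<lambda>r. (T (\<sigma> r - 0 * sqrt (\<sigma> r)) - b r) / a r - (T (\<sigma> r - 0 * sqrt (\<sigma> r)) - b (\<sigma> r)) / a (\<sigma> r) * (a (\<sigma> r) / a r) = (b (\<sigma> r) - b r) / a r) at_top"
      using E5 Es
    proof eventually_elim
      case (elim r)
      then have "a r > 0" "a (\<sigma> r) > 0" using apos by auto
      with elim show ?case by (simp add: field_simps)
    qed
  qed
qed

lemma c_small:
  assumes gneg: "g < 0" and T0: "(T \<longlongrightarrow> 0) at_top"
  shows "((\<lambda>r. T r / (a r / \<bar>g\<bar>)) \<longlongrightarrow> 1) at_top"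
proof -
  define \<sigma> where "\<sigma> r = r + sqrt r" for r :: real
  have E5: "eventually (\<lambda>r. r > (0::real)) at_top" by (rule eventually_gt_at_top)
  have sig: "filterlim \<sigma> at_top at_top" unfolding \<sigma>_def by real_asymp
  have lim1: "((\<lambda>r. (\<sigma> r - r) / sqrt r) \<longlongrightarrow> 1) at_top"
    using tendsto_const[of "1::real" at_top]
  proof (rule Lim_transform_eventually)
    show "eventually (\<lambda>r. 1 = (\<sigma> r - r) / sqrt r) at_top"
      using E5 by eventually_elim (simp add: \<sigma>_def)
  qed
  then have lim: "((\<lambda>r. (\<sigma> r - r) / sqrt r) \<longlongrightarrow> - (-1)) at_top" by simp
  have gn: "g \<le> 0" using gneg by simp
  note RA = ratio(1)[OF sig lim gn] and RB = ratio(2)[OF sig lim gn]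
  define q where "q = kf g (-1)"
  have q: "q = exp (g / 2)" by (simp add: q_def kf_def)
  have q0: "0 < q" and q1: "q < 1" using gneg by (simp_all add: q)
  have hm1: "h_inv g (-1) = (1 - q) / g" using gneg by (simp add: h_inv_def q)
  define c where "c r = b r + a r / g" for r
  have CD0: "((\<lambda>r. (b (\<sigma> r) - b r) / a r + (a (\<sigma> r) / a r - 1) / g) \<longlongrightarrow> (1 - q) / g + (q - 1) / g) at_top"
  proof -
    have RA': "((\<lambda>r. a (\<sigma> r) / a r) \<longlongrightarrow> q) at_top" using RA by (simp add: q_def)
    have RB': "((\<lambda>r. (b (\<sigma> r) - b r) / a r) \<longlongrightarrow> (1 - q) / g) at_top" using RB by (simp add: hm1)
    show ?thesis
      using tendsto_add[OF RB' tendsto_divide[OF tendsto_diff[OF RA' tendsto_const[of 1]] tendsto_const[of g]]] gneg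
      by simp
  qed
  have CD: "((\<lambda>r. (c (\<sigma> r) - c r) / a r) \<longlongrightarrow> 0) at_top"
  proof (rule Lim_transform_eventually)
    show "((\<lambda>r. (b (\<sigma> r) - b r) / a r + (a (\<sigma> r) / a r - 1) / g) \<longlongrightarrow> 0) at_top"
    proof -
      have z: "(1 - q) / g + (q - 1) / g = 0" by (simp add: add_divide_distrib[symmetric])
      show ?thesis using CD0 unfolding z .
    qed
    show "eventually (\<lambda>r. (b (\<sigma> r) - b r) / a r + (a (\<sigma> r) / a r - 1) / g = (c (\<sigma> r) - c r) / a r) at_top"
      using E5
    proof eventually_elim
      case (elim r)
      then have "a r > 0" using apos by auto
      then show ?case using gneg by (simp add: c_def field_simps)
    qed
  qed
  define q' where "q' = (1 + q) / 2"
  have q'0: "0 < q'" and q'1: "q' < 1" and qq': "q < q'" using q0 q1 by (simp_all add: q'_def)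
  have e0: "((\<lambda>r. (T r - b r) / a r) \<longlongrightarrow> 0) at_top"
    using hyp[of 0] by (simp add: h0)
  have csmall: "((\<lambda>r. c r / a r) \<longlongrightarrow> 0) at_top"
    unfolding tendsto_iff dist_real_def
  proof (intro allI impI)
    fix e :: real assume e: "e > 0"
    define e0 where "e0 = e * (1 - q') / 2"
    have e0p: "e0 > 0" using e q'1 by (simp add: e0_def)
    have Ea: "eventually (\<lambda>r. \<bar>(c (\<sigma> r) - c r) / a r - 0\<bar> < e0) at_top"
      using CD[unfolded tendsto_iff dist_real_def] e0p by blast
    have Eb: "eventually (\<lambda>r. a (\<sigma> r) / a r < q') at_top"
      using RA qq' unfolding q_def by (rule order_tendstoD)
    have "eventually (\<lambda>r. r \<ge> 1 \<and> \<bar>c (\<sigma> r) - c r\<bar> \<le> e0 * a r \<and> a (\<sigma> r) \<le> q' * a r) at_top"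
      using Ea Eb eventually_ge_at_top[of "1::real"]
    proof eventually_elim
      case (elim r)
      then have ar: "a r > 0" using apos by auto
      from elim(1) ar have "\<bar>c (\<sigma> r) - c r\<bar> < e0 * a r" by (simp add: abs_divide field_simps)
      moreover from elim(2) ar have "a (\<sigma> r) \<le> q' * a r" by (simp add: field_simps)
      ultimately show ?case using elim(3) by simp
    qed
    then obtain R where R: "\<And>r. r \<ge> R \<Longrightarrow> r \<ge> 1 \<and> \<bar>c (\<sigma> r) - c r\<bar> \<le> e0 * a r \<and> a (\<sigma> r) \<le> q' * a r"
      by (auto simp: eventually_at_top_linorder)
    have key: "\<bar>c r\<bar> \<le> e0 / (1 - q') * a r" if r: "r \<ge> R" for r
    proof -
      define u where "u n = (\<sigma> ^^ n) r" for n
      have us: "u (Suc n) = u n + sqrt (u n)" for n by (simp add: u_def \<sigma>_def)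
      have u0: "u 0 = r" by (simp add: u_def)
      have U1: "u n \<ge> r + real n" for n
      proof (induction n)
        case 0 then show ?case by (simp add: u0)
      next
        case (Suc n)
        have "u n \<ge> 1" using Suc R[of r] r by simp
        then have s1: "sqrt (u n) \<ge> 1" by simp
        have "r + real (Suc n) = (r + real n) + 1" by simp
        also have "\<dots> \<le> u n + sqrt (u n)" using Suc.IH s1 by (rule add_mono)
        finally show ?case using us[of n] by simp
      qed
      have uR: "u n \<ge> R" for n using U1[of n] r by simp
      have U2: "a (u n) \<le> q' ^ n * a r" for n
      proof (induction n)
        case 0 then show ?case by (simp add: u0)
      next
        case (Suc n)
        have "a (u (Suc n)) \<le> q' * a (u n)" using R[OF uR[of n]] by (simp add: us \<sigma>_def)
        also have "\<dots> \<le> q' * (q' ^ n * a r)" using Suc q'0 by (intro mult_left_mono) auto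
        finally show ?case by simp
      qed
      have U3: "\<bar>c (u n) - c r\<bar> \<le> e0 * a r * (1 - q' ^ n) / (1 - q')" for n
      proof (induction n)
        case 0 then show ?case by (simp add: u0)
      next
        case (Suc n)
        have "\<bar>c (u (Suc n)) - c r\<bar> \<le> \<bar>c (u (Suc n)) - c (u n)\<bar> + \<bar>c (u n) - c r\<bar>" by simp
        also have "\<bar>c (u (Suc n)) - c (u n)\<bar> \<le> e0 * a (u n)" using R[OF uR[of n]] by (simp add: us \<sigma>_def)
        also have "\<dots> \<le> e0 * (q' ^ n * a r)" using U2[of n] e0p by (intro mult_left_mono) auto
        finally have "\<bar>c (u (Suc n)) - c r\<bar> \<le> e0 * (q' ^ n * a r) + e0 * a r * (1 - q' ^ n) / (1 - q')"
          using Suc by simp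
        also have "\<dots> = e0 * a r * (1 - q' ^ Suc n) / (1 - q')"
          using q'1 by (simp add: field_simps)
        finally show ?case .
      qed
      have ar: "a r > 0" using R[OF r] apos by auto
      have U4: "\<bar>c (u n) - c r\<bar> \<le> e0 / (1 - q') * a r" for n
      proof -
        have "e0 * a r * (1 - q' ^ n) / (1 - q') \<le> e0 * a r * 1 / (1 - q')"
          using q'0 q'1 e0p ar by (intro divide_right_mono mult_left_mono) auto
        then show ?thesis using U3[of n] by simp
      qed
      have ulim: "filterlim u at_top sequentially"
      proof (rule filterlim_at_top_mono)
        show "filterlim (\<lambda>n. r + real n) at_top sequentially" by real_asymp
        show "eventually (\<lambda>n. r + real n \<le> u n) sequentially" using U1 by simp
      qed
      have alim: "(\<lambda>n. a (u n)) \<longlonglongrightarrow> 0"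
      proof (rule tendsto_sandwich[where f="\<lambda>n. 0" and h="\<lambda>n. q' ^ n * a r"])
        show "eventually (\<lambda>n. 0 \<le> a (u n)) sequentially"
        proof (rule always_eventually, rule allI)
          fix n
          have "u n \<ge> 1" using R[OF uR[of n]] by simp
          then show "0 \<le> a (u n)" using apos[of "u n"] by simp
        qed
        show "eventually (\<lambda>n. a (u n) \<le> q' ^ n * a r) sequentially" using U2 by simp
        show "(\<lambda>n. 0) \<longlonglongrightarrow> (0::real)" by simp
        have "(\<lambda>n. q' ^ n * a r) \<longlonglongrightarrow> 0 * a r"
          using q'0 q'1 by (intro tendsto_intros) auto
        then show "(\<lambda>n. q' ^ n * a r) \<longlonglongrightarrow> 0" by simp
      qed
      have "(\<lambda>n. T (u n) - a (u n) * ((T (u n) - b (u n)) / a (u n)) + a (u n) / g) \<longlonglongrightarrow> 0 - 0 * 0 + 0 / g"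
        using gneg by (intro tendsto_intros filterlim_compose[OF T0 ulim] filterlim_compose[OF e0 ulim] alim) auto
      then have "(\<lambda>n. T (u n) - a (u n) * ((T (u n) - b (u n)) / a (u n)) + a (u n) / g) \<longlonglongrightarrow> 0" by simp
      then have "(\<lambda>n. c (u n)) \<longlonglongrightarrow> 0"
      proof (rule Lim_transform_eventually)
        show "eventually (\<lambda>n. T (u n) - a (u n) * ((T (u n) - b (u n)) / a (u n)) + a (u n) / g = c (u n)) sequentially"
        proof (rule always_eventually, rule allI)
          fix n
          have "a (u n) > 0" using R[OF uR[of n]] apos by auto
          then show "T (u n) - a (u n) * ((T (u n) - b (u n)) / a (u n)) + a (u n) / g = c (u n)"
            by (simp add: c_def)
        qed
      qed
      then have "(\<lambda>n. \<bar>c (u n) - c r\<bar>) \<longlonglongrightarrow> \<bar>0 - c r\<bar>"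
        by (intro tendsto_intros)
      then have "\<bar>0 - c r\<bar> \<le> e0 / (1 - q') * a r"
        by (rule tendsto_upperbound) (use U4 in auto)
      then show ?thesis by simp
    qed
    show "eventually (\<lambda>r. \<bar>c r / a r - 0\<bar> < e) at_top"
      using eventually_ge_at_top[of R] eventually_gt_at_top[of "0::real"]
    proof eventually_elim
      case (elim r)
      then have ar: "a r > 0" using apos by auto
      have "\<bar>c r / a r\<bar> = \<bar>c r\<bar> / a r" using ar by (simp add: abs_divide)
      also have "\<dots> \<le> e0 / (1 - q')" using key[OF elim(1)] ar by (simp add: field_simps)
      also have "\<dots> = e / 2" using q'1 by (simp add: e0_def field_simps)
      also have "\<dots> < e" using e by simp
      finally show ?case by simp
    qed
  qed
  have "((\<lambda>r. - g * ((T r - b r) / a r + c r / a r) + 1) \<longlongrightarrow> - g * (0 + 0) + 1) at_top"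
    by (intro tendsto_intros e0 csmall)
  then have "((\<lambda>r. - g * ((T r - b r) / a r + c r / a r) + 1) \<longlongrightarrow> 1) at_top" by simp
  then show ?thesis
  proof (rule Lim_transform_eventually)
    show "eventually (\<lambda>r. - g * ((T r - b r) / a r + c r / a r) + 1 = T r / (a r / \<bar>g\<bar>)) at_top"
      using E5
    proof eventually_elim
      case (elim r)
      then have "a r > 0" using apos by auto
      then show ?case using gneg by (simp add: c_def field_simps)
    qed
  qed
qed

end

lemma T_mono:
  assumes "max 1 (tail P 1) \<le> u" "u \<le> v"
  shows "tail_inv P v \<le> tail_inv P u"
  unfolding tail_inv_def
proof (rule cInf_superset_mono)
  show "{x. 0 < x \<and> tail P x \<le> u} \<noteq> {}" using assms by (intro exI[of _ 1] notI) auto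
  show "bdd_below {x. 0 < x \<and> tail P x \<le> v}" by (rule bdd_belowI[of _ 0]) auto
  show "{x. 0 < x \<and> tail P x \<le> u} \<subseteq> {x. 0 < x \<and> tail P x \<le> v}" using assms by auto
qed

lemma T_lim: "(tail_inv P \<longlongrightarrow> 0) at_top"
  unfolding tendsto_iff dist_real_def
proof (intro allI impI)
  fix e :: real assume e: "e > 0"
  show "eventually (\<lambda>y. \<bar>tail_inv P y - 0\<bar> < e) at_top"
    using eventually_ge_at_top[of "max (max 1 (tail P 1)) (tail P (e/2))"]
  proof eventually_elim
    case (elim y)
    have ne: "{x. 0 < x \<and> tail P x \<le> y} \<noteq> {}" using elim by (intro exI[of _ 1] notI) auto
    have bb: "bdd_below {x. 0 < x \<and> tail P x \<le> y}" by (rule bdd_belowI[of _ 0]) auto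
    have "tail_inv P y \<ge> 0" unfolding tail_inv_def
      using ne by (rule cInf_greatest) auto
    moreover have "tail_inv P y \<le> e/2" unfolding tail_inv_def
      using bb e elim by (intro cInf_lower) auto
    ultimately show ?case using e by simp
  qed
qed

lemma H_lim: "filterlim H_inv at_top at_top"
  unfolding H_inv_def by real_asymp

lemma H_mult:
  assumes "x \<ge> 1" "l > 0"
  shows "H_inv (l * x) = H_inv x + ln l * sqrt (H_inv x) + (ln l)^2 / 4"
proof -
  have "sqrt (H_inv x) = ln x / 2" using assms
    by (simp add: H_inv_def real_sqrt_divide)
  then show ?thesis using assms by (simp add: H_inv_def ln_mult power2_eq_square field_simps)
qed

lemma rho_lim: "((\<lambda>r. (r + c * sqrt r + c^2/4 - r) / sqrt r) \<longlongrightarrow> - (- c)) at_top"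
  by real_asymp

lemma rho_fl: "filterlim (\<lambda>r. r + c * sqrt r + c^2/4) at_top at_top"
  by real_asymp

lemma compH:
  assumes "(f \<longlongrightarrow> L) at_top" "eventually (\<lambda>x. f (H_inv x) = g x) at_top"
  shows "(g \<longlongrightarrow> L) at_top"
  using filterlim_compose[OF assms(1) H_lim] assms(2) by (rule Lim_transform_eventually)

lemma H_pos: "eventually (\<lambda>x. H_inv x > 0) at_top"
  using H_lim by (simp add: filterlim_at_top_dense)

theorem proposition3p1:
  fixes P :: "real measure" and a b :: "real \<Rightarrow> real" and \<gamma> :: real
  assumes "levy_measure_pos P" and "infinite_measure_pos P" and "atomless P"
    and "\<forall>r>0. a r > 0" and "\<gamma> \<le> 0"
    and "\<forall>y::real. ((\<lambda>r. (tail_inv P (r - y * sqrt r) - b r) / a r) \<longlongrightarrow> h_inv \<gamma> y) at_top"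
  shows "(\<gamma> < 0 \<longrightarrow>
           (\<lambda>x. tail_inv P (H_inv x)) \<sim>[at_top] (\<lambda>x. a (H_inv x) / \<bar>\<gamma>\<bar>) \<and>
           regularly_varying (\<lambda>x. a (H_inv x) / \<bar>\<gamma>\<bar>) (- \<bar>\<gamma>\<bar> / 2))
       \<and> (\<gamma> = 0 \<longrightarrow>
           deHaan_Pi (\<lambda>x. - tail_inv P (H_inv x)) (\<lambda>x. a (H_inv x) / 2) \<and>
           slowly_varying (\<lambda>x. a (H_inv x) / 2))"
proof -
  interpret rvs "tail_inv P" a b \<gamma> "max 1 (tail P 1)"
    using assms(4,6) by unfold_locales (auto intro: T_mono)
  have gn: "\<gamma> \<le> 0" by fact
  have Hpos: "eventually (\<lambda>x. a (H_inv x) > 0) at_top"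
    using H_pos by eventually_elim (use apos in auto)
  have RAT: "((\<lambda>x. a (H_inv (l * x)) / a (H_inv x)) \<longlongrightarrow> kf \<gamma> (- ln l)) at_top" if l: "l > 0" for l
  proof (rule compH)
    show "((\<lambda>r. a (r + ln l * sqrt r + (ln l)^2/4) / a r) \<longlongrightarrow> kf \<gamma> (- ln l)) at_top"
      by (rule ratio(1)[OF rho_fl rho_lim gn])
    show "eventually (\<lambda>x. a (H_inv x + ln l * sqrt (H_inv x) + (ln l)^2/4) / a (H_inv x)
        = a (H_inv (l * x)) / a (H_inv x)) at_top"
      using eventually_ge_at_top[of "1::real"] by eventually_elim (simp add: H_mult l)
  qed
  have part1: "\<gamma> < 0 \<longrightarrow>
           (\<lambda>x. tail_inv P (H_inv x)) \<sim>[at_top] (\<lambda>x. a (H_inv x) / \<bar>\<gamma>\<bar>) \<and>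
           regularly_varying (\<lambda>x. a (H_inv x) / \<bar>\<gamma>\<bar>) (- \<bar>\<gamma>\<bar> / 2)"
  proof
    assume gneg: "\<gamma> < 0"
    have A: "(\<lambda>x. tail_inv P (H_inv x)) \<sim>[at_top] (\<lambda>x. a (H_inv x) / \<bar>\<gamma>\<bar>)"
    proof (rule asymp_equivI')
      show "((\<lambda>x. tail_inv P (H_inv x) / (a (H_inv x) / \<bar>\<gamma>\<bar>)) \<longlongrightarrow> 1) at_top"
        by (rule compH[OF c_small[OF gneg T_lim]]) simp
    qed
    have B: "regularly_varying (\<lambda>x. a (H_inv x) / \<bar>\<gamma>\<bar>) (- \<bar>\<gamma>\<bar> / 2)"
      unfolding regularly_varying_def
    proof (intro conjI allI impI)
      show "eventually (\<lambda>x. a (H_inv x) / \<bar>\<gamma>\<bar> > 0) at_top"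
        using Hpos by eventually_elim (use gneg in \<open>simp add: divide_pos_neg\<close>)
      fix l :: real assume l: "l > 0"
      have e: "kf \<gamma> (- ln l) = l powr (- \<bar>\<gamma>\<bar> / 2)"
        using l gneg by (simp add: kf_def powr_def)
      show "((\<lambda>x. a (H_inv (l * x)) / \<bar>\<gamma>\<bar> / (a (H_inv x) / \<bar>\<gamma>\<bar>)) \<longlongrightarrow> l powr (- \<bar>\<gamma>\<bar> / 2)) at_top"
        using RAT[OF l] gneg unfolding e by simp
    qed
    show "(\<lambda>x. tail_inv P (H_inv x)) \<sim>[at_top] (\<lambda>x. a (H_inv x) / \<bar>\<gamma>\<bar>) \<and>
           regularly_varying (\<lambda>x. a (H_inv x) / \<bar>\<gamma>\<bar>) (- \<bar>\<gamma>\<bar> / 2)" using A B by simp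
  qed
  have part2: "\<gamma> = 0 \<longrightarrow>
           deHaan_Pi (\<lambda>x. - tail_inv P (H_inv x)) (\<lambda>x. a (H_inv x) / 2) \<and>
           slowly_varying (\<lambda>x. a (H_inv x) / 2)"
  proof
    assume g0: "\<gamma> = 0"
    have A: "deHaan_Pi (\<lambda>x. - tail_inv P (H_inv x)) (\<lambda>x. a (H_inv x) / 2)"
      unfolding deHaan_Pi_def
    proof (intro conjI allI impI)
      show "eventually (\<lambda>x. a (H_inv x) / 2 > 0) at_top"
        using Hpos by eventually_elim simp
      fix t :: real assume t: "t > 0"
      have S: "((\<lambda>r. (tail_inv P (r + ln t * sqrt r + (ln t)^2/4) - b r) / a r) \<longlongrightarrow> h_inv \<gamma> (- ln t)) at_top"
        by (rule shift[OF rho_lim])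
      have Z: "((\<lambda>r. (tail_inv P (r - 0 * sqrt r) - b r) / a r) \<longlongrightarrow> h_inv \<gamma> 0) at_top"
        by (rule hyp)
      have "((\<lambda>r. -2 * ((tail_inv P (r + ln t * sqrt r + (ln t)^2/4) - b r) / a r - (tail_inv P (r - 0 * sqrt r) - b r) / a r))
          \<longlongrightarrow> -2 * (h_inv \<gamma> (- ln t) - h_inv \<gamma> 0)) at_top"
        by (intro tendsto_intros S Z)
      then have L: "((\<lambda>r. -2 * ((tail_inv P (r + ln t * sqrt r + (ln t)^2/4) - b r) / a r - (tail_inv P (r - 0 * sqrt r) - b r) / a r))
          \<longlongrightarrow> ln t) at_top"
        using g0 by (simp add: h_inv_def)
      show "((\<lambda>s. (- tail_inv P (H_inv (s * t)) - - tail_inv P (H_inv s)) / (a (H_inv s) / 2)) \<longlongrightarrow> ln t) at_top"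
      proof (rule compH[OF L])
        show "eventually (\<lambda>s. -2 * ((tail_inv P (H_inv s + ln t * sqrt (H_inv s) + (ln t)^2/4) - b (H_inv s)) / a (H_inv s)
             - (tail_inv P (H_inv s - 0 * sqrt (H_inv s)) - b (H_inv s)) / a (H_inv s))
             = (- tail_inv P (H_inv (s * t)) - - tail_inv P (H_inv s)) / (a (H_inv s) / 2)) at_top"
          using eventually_ge_at_top[of "1::real"] Hpos
        proof eventually_elim
          case (elim s)
          have hm: "H_inv (s * t) = H_inv s + ln t * sqrt (H_inv s) + (ln t)^2/4"
            using H_mult[OF elim(1) t] by (simp add: mult.commute)
          show ?case using elim(2) unfolding hm by (simp add: field_simps)
        qed
      qed
    qed
    have B: "slowly_varying (\<lambda>x. a (H_inv x) / 2)"
      unfolding slowly_varying_def regularly_varying_def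
    proof (intro conjI allI impI)
      show "eventually (\<lambda>x. a (H_inv x) / 2 > 0) at_top"
        using Hpos by eventually_elim simp
      fix l :: real assume l: "l > 0"
      show "((\<lambda>x. a (H_inv (l * x)) / 2 / (a (H_inv x) / 2)) \<longlongrightarrow> l powr 0) at_top"
        using RAT[OF l] l g0 by (simp add: kf_def)
    qed
    show "deHaan_Pi (\<lambda>x. - tail_inv P (H_inv x)) (\<lambda>x. a (H_inv x) / 2) \<and>
           slowly_varying (\<lambda>x. a (H_inv x) / 2)" using A B by simp
  qed
  show ?thesis using part1 part2 by blast
qed

end
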